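(* In the setting below, with $Q=L/\mu$, suppose $0<\eta\le\frac{1}{L(K+1)}$, let $a\ge2$ be an integer and set $\epsilon_i=2\eta L(\eta KL)^{i-1}$ for $i\ge 1$. Then for every integer $k\ge aK+1$, \[ \Big(1+\eta\frac{\mu}{8}\Big)F_{k+1}\le\Big(1-\sum_{i=1}^{a-1}\epsilon_i\Big)F_k+\sum_{i=1}^{a-1}\epsilon_i F_{k-iK}+4KQ\,\epsilon_{a-1}\sum_{j=k-aK}^{k}F_j . \]
   Context: Let $m,n\ge 1$ be integers and $\|\cdot\|$ the Euclidean norm on $\mathbb{R}^n$. For $i=1,\dots,m$, let $f_i:\mathbb{R}^n\to\mathbb{R}$ be continuously differentiable with $\|\nabla f_i(x)-\nabla f_i(y)\|\le L_i\|x-y\|$ for all $x,y$, where $L_i\ge 0$ (the $f_i$ are not assumed convex). Let $f=\frac1m\sum_{i=1}^m f_i$ and $L=\frac1m\sum_{i=1}^m L_i$. Assume $f$ is $\mu$-strongly convex for some $\mu>0$ (i.e. $x\mapsto f(x)-\frac{\mu}{2}\|x\|^2$ is convex). Let $r:\mathbb{R}^n\to(-\infty,\infty]$ be proper, closed and convex, let $F=f+r$, and let $x^*$ be the unique minimizer of $F$. For $\eta>0$ define $\mathrm{prox}_r^\eta(y)=\arg\min_{x\in\mathbb{R}^n}\{\frac12\|x-y\|^2+\eta r(x)\}$. PIAG method: fix an integer $K\ge 0$, a step size $\eta>0$ and $x_0\in\mathbb{R}^n$; for each $k\ge0$ and each $i$ let $\tau_{i,k}$ be any (deterministically chosen) integer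 with $\max(k-K,0)\le\tau_{i,k}\le k$; set $g_k=\frac1m\sum_{i=1}^m\nabla f_i(x_{\tau_{i,k}})$ and $x_{k+1}=\mathrm{prox}_r^\eta(x_k-\eta g_k)$. Define $F_k=F(x_k)-F(x^* )$. *)

theory Defs
  imports "HOL-Analysis.Analysis"
begin

definition proper_closed_convex :: "('a::real_normed_vector \<Rightarrow> ereal) \<Rightarrow> bool" where
  "proper_closed_convex r \<longleftrightarrow>
     (\<forall>x. r x \<noteq> -\<infinity>) \<and> (\<exists>x. r x \<noteq> \<infinity>) \<and>
     convex {(x, t::real). r x \<le> ereal t} \<and> closed {(x, t::real). r x \<le> ereal t}"

definition is_prox :: "('a::real_normed_vector \<Rightarrow> ereal) \<Rightarrow> real \<Rightarrow> 'a \<Rightarrow> 'a \<Rightarrow> bool" where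
  "is_prox r \<eta> v y \<longleftrightarrow>
     (\<forall>x. ereal (norm (y - v)^2 / 2) + ereal \<eta> * r y \<le> ereal (norm (x - v)^2 / 2) + ereal \<eta> * r x)"

end

theory Submission
  imports Defs
begin


lemma lim0:
  fixes c d :: real
  assumes "\<And>t. 0 < t \<Longrightarrow> t < 1 \<Longrightarrow> c \<le> t * d"
  shows "c \<le> 0"
proof (rule ccontr)
  assume "\<not> c \<le> 0"
  hence c: "c > 0" by simp
  define t where "t = min (1/2) (c / (2 * (\<bar>d\<bar> + 1)))"
  have t0: "t > 0" using c by (simp add: t_def)
  have t1: "t < 1" by (simp add: t_def)
  have "t * d \<le> t * \<bar>d\<bar>" using t0 by (simp add: mult_left_mono)
  also have "\<dots> \<le> c / (2 * (\<bar>d\<bar> + 1)) * \<bar>d\<bar>"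
    by (rule mult_right_mono) (auto simp: t_def)
  also have "\<dots> < c"
  proof -
    have "\<bar>d\<bar> / (2 * (\<bar>d\<bar> + 1)) < 1" by (simp add: divide_simps)
    hence "c * (\<bar>d\<bar> / (2 * (\<bar>d\<bar> + 1))) < c * 1" using c by (intro mult_strict_left_mono) auto
    thus ?thesis by simp
  qed
  finally show False using assms[OF t0 t1] by simp
qed

lemma norm_chord_identity:
  fixes a b :: "'a::real_inner"
  shows "(1-t) * norm a ^ 2 + t * norm b ^ 2 - norm ((1-t) *\<^sub>R a + t *\<^sub>R b) ^ 2
     = t * (1-t) * norm (a - b) ^ 2"
  by (simp add: power2_norm_eq_inner inner_add_left inner_add_right inner_diff_left inner_diff_right
      inner_commute algebra_simps)

lemma quad_bounds:
  fixes \<phi> :: "'a::real_inner \<Rightarrow> real"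
  assumes der: "\<And>y. (\<phi> has_derivative (\<lambda>h. G y \<bullet> h)) (at y)"
    and lip: "\<And>y z. norm (G y - G z) \<le> M * norm (y - z)"
  shows "\<phi> y \<le> \<phi> z + G z \<bullet> (y - z) + M / 2 * norm (y - z) ^ 2"
    and "\<phi> y \<ge> \<phi> z + G z \<bullet> (y - z) - M / 2 * norm (y - z) ^ 2"
proof -
  define h where "h = y - z"
  have d1: "((\<lambda>t. \<phi> (z + t *\<^sub>R h)) has_real_derivative (G (z + t *\<^sub>R h) \<bullet> h)) (at t)" for t
  proof -
    have "((\<lambda>t. z + t *\<^sub>R h) has_derivative (\<lambda>s. s *\<^sub>R h)) (at t)"
      by (auto intro!: derivative_eq_intros)
    from has_derivative_compose[OF this der]
    have "((\<lambda>t. \<phi> (z + t *\<^sub>R h)) has_derivative (\<lambda>s. G (z + t *\<^sub>R h) \<bullet> (s *\<^sub>R h))) (at t)" .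
    moreover have "(\<lambda>s. G (z + t *\<^sub>R h) \<bullet> (s *\<^sub>R h)) = (*) (G (z + t *\<^sub>R h) \<bullet> h)"
      by (auto simp: fun_eq_iff)
    ultimately show ?thesis by (simp add: has_field_derivative_def)
  qed
  have bnd: "\<bar>G (z + t *\<^sub>R h) \<bullet> h - G z \<bullet> h\<bar> \<le> M * t * norm h ^ 2" if "t \<ge> 0" for t
  proof -
    have "\<bar>G (z + t *\<^sub>R h) \<bullet> h - G z \<bullet> h\<bar> = \<bar>(G (z + t *\<^sub>R h) - G z) \<bullet> h\<bar>"
      by (simp add: inner_diff_left)
    also have "\<dots> \<le> norm (G (z + t *\<^sub>R h) - G z) * norm h" by (rule Cauchy_Schwarz_ineq2)
    also have "\<dots> \<le> M * norm (t *\<^sub>R h) * norm h"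
      using lip[of "z + t *\<^sub>R h" z] by (intro mult_right_mono) auto
    finally show ?thesis using that by (simp add: power2_eq_square mult.assoc)
  qed
  have "(\<lambda>t. \<phi> (z + t *\<^sub>R h) - t * (G z \<bullet> h) - M/2 * t^2 * norm h ^ 2) 1
      \<le> (\<lambda>t. \<phi> (z + t *\<^sub>R h) - t * (G z \<bullet> h) - M/2 * t^2 * norm h ^ 2) 0"
  proof (rule DERIV_nonpos_imp_nonincreasing[of 0 1])
    fix t :: real assume t: "0 \<le> t" "t \<le> 1"
    have "((\<lambda>t. \<phi> (z + t *\<^sub>R h) - t * (G z \<bullet> h) - M/2 * t^2 * norm h ^ 2) has_real_derivative
        (G (z + t *\<^sub>R h) \<bullet> h - G z \<bullet> h - M * t * norm h ^ 2)) (at t)"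
      by (rule derivative_eq_intros d1 refl | simp)+
    moreover have "G (z + t *\<^sub>R h) \<bullet> h - G z \<bullet> h - M * t * norm h ^ 2 \<le> 0"
      using bnd[OF t(1)] by linarith
    ultimately show "\<exists>y. ((\<lambda>t. \<phi> (z + t *\<^sub>R h) - t * (G z \<bullet> h) - M/2 * t^2 * norm h ^ 2) has_real_derivative y) (at t) \<and> y \<le> 0"
      by blast
  qed simp
  thus "\<phi> y \<le> \<phi> z + G z \<bullet> (y - z) + M / 2 * norm (y - z) ^ 2" by (simp add: h_def)
  have "(\<lambda>t. \<phi> (z + t *\<^sub>R h) - t * (G z \<bullet> h) + M/2 * t^2 * norm h ^ 2) 0
      \<le> (\<lambda>t. \<phi> (z + t *\<^sub>R h) - t * (G z \<bullet> h) + M/2 * t^2 * norm h ^ 2) 1"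
  proof (rule DERIV_nonneg_imp_nondecreasing[of 0 1])
    fix t :: real assume t: "0 \<le> t" "t \<le> 1"
    have "((\<lambda>t. \<phi> (z + t *\<^sub>R h) - t * (G z \<bullet> h) + M/2 * t^2 * norm h ^ 2) has_real_derivative
        (G (z + t *\<^sub>R h) \<bullet> h - G z \<bullet> h + M * t * norm h ^ 2)) (at t)"
      by (rule derivative_eq_intros d1 refl | simp)+
    moreover have "G (z + t *\<^sub>R h) \<bullet> h - G z \<bullet> h + M * t * norm h ^ 2 \<ge> 0"
      using bnd[OF t(1)] by linarith
    ultimately show "\<exists>y. ((\<lambda>t. \<phi> (z + t *\<^sub>R h) - t * (G z \<bullet> h) + M/2 * t^2 * norm h ^ 2) has_real_derivative y) (at t) \<and> y \<ge> 0"
      by blast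
  qed simp
  thus "\<phi> y \<ge> \<phi> z + G z \<bullet> (y - z) - M / 2 * norm (y - z) ^ 2" by (simp add: h_def)
qed



lemma chord_sc:
  fixes \<phi> :: "'a::real_inner \<Rightarrow> real"
  assumes cv: "convex_on UNIV (\<lambda>y. \<phi> y - \<mu> / 2 * norm y ^ 2)" and t: "0 \<le> t" "t \<le> 1"
  shows "\<phi> ((1-t) *\<^sub>R a + t *\<^sub>R b) \<le> (1-t) * \<phi> a + t * \<phi> b - \<mu>/2 * (t * (1-t) * norm (a - b) ^ 2)"
proof -
  define P where "P = \<phi> ((1-t) *\<^sub>R a + t *\<^sub>R b)"
  define S where "S = norm ((1-t) *\<^sub>R a + t *\<^sub>R b) ^ 2"
  have i1: "P - \<mu> / 2 * S \<le> (1-t) * (\<phi> a - \<mu> / 2 * norm a ^ 2) + t * (\<phi> b - \<mu> / 2 * norm b ^ 2)"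
    unfolding P_def S_def using convex_onD[OF cv t] by simp
  have Se: "S = ((1-t) * norm a ^ 2 + t * norm b ^ 2) - t * (1-t) * norm (a - b) ^ 2"
    unfolding S_def using norm_chord_identity[of t a b] by linarith
  have e1: "\<mu> / 2 * S = \<mu> / 2 * ((1-t) * norm a ^ 2 + t * norm b ^ 2) - \<mu>/2 * (t * (1-t) * norm (a - b) ^ 2)"
    unfolding Se by (simp add: right_diff_distrib)
  have e2: "(1-t) * (\<phi> a - \<mu> / 2 * norm a ^ 2) + t * (\<phi> b - \<mu> / 2 * norm b ^ 2)
      = (1-t) * \<phi> a + t * \<phi> b - \<mu> / 2 * ((1-t) * norm a ^ 2 + t * norm b ^ 2)"
    by (simp add: field_simps)
  show ?thesis using i1 e1 e2 unfolding P_def[symmetric] by linarith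
qed

lemma r_chord:
  fixes r :: "'a::real_normed_vector \<Rightarrow> ereal"
  assumes pcc: "proper_closed_convex r" and u: "r u \<noteq> \<infinity>" and v: "r v \<noteq> \<infinity>"
    and t: "0 \<le> t" "t \<le> 1"
  shows "r ((1-t) *\<^sub>R u + t *\<^sub>R v) \<le> ereal ((1-t) * real_of_ereal (r u) + t * real_of_ereal (r v))"
proof -
  have cvx: "convex {(x, s::real). r x \<le> ereal s}" and ninf: "\<And>x. r x \<noteq> -\<infinity>"
    using pcc by (auto simp: proper_closed_convex_def)
  have ru: "r u = ereal (real_of_ereal (r u))" using u ninf[of u] by (cases "r u") auto
  have rv: "r v = ereal (real_of_ereal (r v))" using v ninf[of v] by (cases "r v") auto
  have "(u, real_of_ereal (r u)) \<in> {(x, s::real). r x \<le> ereal s}" using ru by simp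
  moreover have "(v, real_of_ereal (r v)) \<in> {(x, s::real). r x \<le> ereal s}" using rv by simp
  ultimately have "(1-t) *\<^sub>R (u, real_of_ereal (r u)) + t *\<^sub>R (v, real_of_ereal (r v)) \<in> {(x, s::real). r x \<le> ereal s}"
    using cvx t unfolding convex_def by (metis diff_add_cancel diff_ge_0_iff_ge)
  thus ?thesis by simp
qed

lemma prox_finite:
  fixes r :: "'a::real_normed_vector \<Rightarrow> ereal"
  assumes pcc: "proper_closed_convex r" and eta: "\<eta> > 0" and px: "is_prox r \<eta> v p"
  shows "r p = ereal (real_of_ereal (r p))"
proof -
  obtain w where w: "r w \<noteq> \<infinity>" and ninf: "\<And>x. r x \<noteq> -\<infinity>"
    using pcc by (auto simp: proper_closed_convex_def)
  have rw: "r w = ereal (real_of_ereal (r w))" using w ninf[of w] by (cases "r w") auto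
  have le: "ereal (norm (p - v)^2 / 2) + ereal \<eta> * r p \<le> ereal (norm (w - v)^2 / 2) + ereal \<eta> * r w"
    using px by (simp add: is_prox_def)
  have "r p \<noteq> \<infinity>"
  proof
    assume inf: "r p = \<infinity>"
    have "ereal \<eta> * r p = \<infinity>" using eta inf by simp
    hence A: "ereal (norm (p - v)^2 / 2) + ereal \<eta> * r p = \<infinity>" by simp
    have B: "ereal (norm (w - v)^2 / 2) + ereal \<eta> * r w = ereal (norm (w - v)^2 / 2 + \<eta> * real_of_ereal (r w))"
      by (subst rw) simp
    have "(\<infinity>::ereal) \<le> ereal (norm (w - v)^2 / 2 + \<eta> * real_of_ereal (r w))"
      using le by (simp only: A B)
    thus False by simp
  qed
  thus ?thesis using ninf[of p] by (cases "r p") auto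
qed

lemma norm_add_scale_sq:
  fixes u w :: "'a::real_inner"
  shows "norm (u + t *\<^sub>R w)^2 = norm u^2 + 2 * t * (u \<bullet> w) + t^2 * norm w^2"
  unfolding power2_norm_eq_inner
  by (simp add: inner_add_left inner_add_right inner_commute power2_eq_square algebra_simps)

lemma prox_vi:
  fixes r :: "'a::real_inner \<Rightarrow> ereal"
  assumes pcc: "proper_closed_convex r" and eta: "\<eta> > 0" and px: "is_prox r \<eta> v p"
    and y: "r y \<noteq> \<infinity>"
  shows "\<eta> * (real_of_ereal (r p) - real_of_ereal (r y)) \<le> (p - v) \<bullet> (y - p)"
proof -
  have rp: "r p = ereal (real_of_ereal (r p))" by (rule prox_finite[OF pcc eta px])
  have rpi: "r p \<noteq> \<infinity>" by (subst rp) simp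
  define N where "N = norm (y - p) ^ 2"
  have "\<eta> * (real_of_ereal (r p) - real_of_ereal (r y)) - (p - v) \<bullet> (y - p) \<le> 0"
  proof (rule lim0)
    fix t :: real assume t: "0 < t" "t < 1"
    define z where "z = (1-t) *\<^sub>R p + t *\<^sub>R y"
    have rz: "r z \<le> ereal ((1-t) * real_of_ereal (r p) + t * real_of_ereal (r y))"
      unfolding z_def by (rule r_chord[OF pcc rpi y]) (use t in auto)
    have "ereal (norm (p - v)^2 / 2) + ereal \<eta> * r p \<le> ereal (norm (z - v)^2 / 2) + ereal \<eta> * r z"
      using px by (simp add: is_prox_def)
    also have "\<dots> \<le> ereal (norm (z - v)^2 / 2) + ereal \<eta> * ereal ((1-t) * real_of_ereal (r p) + t * real_of_ereal (r y))"
      using rz eta by (intro add_left_mono ereal_mult_left_mono) auto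
    finally have "norm (p - v)^2 / 2 + \<eta> * real_of_ereal (r p) \<le> norm (z - v)^2 / 2 + \<eta> * ((1-t) * real_of_ereal (r p) + t * real_of_ereal (r y))"
      by (subst (asm) rp) simp
    moreover have "z - v = (p - v) + t *\<^sub>R (y - p)" by (simp add: z_def algebra_simps)
    hence "norm (z - v)^2 = norm (p - v)^2 + 2 * t * ((p - v) \<bullet> (y - p)) + t^2 * N"
      by (simp only: N_def norm_add_scale_sq)
    ultimately have "t * (\<eta> * (real_of_ereal (r p) - real_of_ereal (r y)) - (p - v) \<bullet> (y - p)) \<le> t * (t * (N/2))"
      by (simp add: algebra_simps power2_eq_square)
    thus "\<eta> * (real_of_ereal (r p) - real_of_ereal (r y)) - (p - v) \<bullet> (y - p) \<le> t * (N/2)"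
      using t by simp
  qed
  thus ?thesis by simp
qed

lemma count_lemma:
  fixes E :: "nat \<Rightarrow> real"
  assumes E: "\<And>l. E l \<ge> 0"
  shows "(\<Sum>j\<in>{p..<q}. \<Sum>l\<in>{j-K..<j}. E l) \<le> real K * (\<Sum>l\<in>{p-K..<q}. E l)"
proof -
  have "(\<Sum>j\<in>{p..<q}. \<Sum>l\<in>{j-K..<j}. E l) = (\<Sum>j\<in>{p..<q}. \<Sum>l\<in>{l\<in>{p-K..<q}. j-K \<le> l \<and> l < j}. E l)"
    by (intro sum.cong refl arg_cong2[where f=sum]) auto
  also have "\<dots> = (\<Sum>l\<in>{p-K..<q}. \<Sum>j\<in>{j\<in>{p..<q}. j-K \<le> l \<and> l < j}. E l)"
    by (rule sum.swap_restrict) auto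
  also have "\<dots> = (\<Sum>l\<in>{p-K..<q}. real (card {j\<in>{p..<q}. j-K \<le> l \<and> l < j}) * E l)"
    by simp
  also have "\<dots> \<le> (\<Sum>l\<in>{p-K..<q}. real K * E l)"
  proof (rule sum_mono)
    fix l assume "l \<in> {p-K..<q}"
    have "{j\<in>{p..<q}. j-K \<le> l \<and> l < j} \<subseteq> {Suc l..<Suc l + K}" by auto
    hence "card {j\<in>{p..<q}. j-K \<le> l \<and> l < j} \<le> K"
      by (metis (no_types, lifting) card_atLeastLessThan card_mono diff_add_inverse finite_atLeastLessThan)
    thus "real (card {j\<in>{p..<q}. j-K \<le> l \<and> l < j}) * E l \<le> real K * E l"
      using E[of l] by (intro mult_right_mono) auto
  qed
  finally show ?thesis by (simp add: sum_distrib_left)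
qed

theorem corollary1:
  fixes m :: nat and fi :: "nat \<Rightarrow> 'a::euclidean_space \<Rightarrow> real"
    and gfi :: "nat \<Rightarrow> 'a \<Rightarrow> 'a" and Li :: "nat \<Rightarrow> real"
    and \<mu> :: real and r :: "'a \<Rightarrow> ereal" and xstar :: 'a
    and K :: nat and \<eta> :: real and x :: "nat \<Rightarrow> 'a" and \<tau> :: "nat \<Rightarrow> nat \<Rightarrow> nat"
    and a :: nat and k :: nat
  defines "f \<equiv> \<lambda>y. (\<Sum>i\<in>{1..m}. fi i y) / real m"
    and "L \<equiv> (\<Sum>i\<in>{1..m}. Li i) / real m"
    and "F \<equiv> \<lambda>y. ereal ((\<Sum>i\<in>{1..m}. fi i y) / real m) + r y"
    and "Q \<equiv> ((\<Sum>i\<in>{1..m}. Li i) / real m) / \<mu>"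
    and "\<epsilon> \<equiv> \<lambda>i::nat. 2 * \<eta> * ((\<Sum>i\<in>{1..m}. Li i) / real m) * (\<eta> * real K * ((\<Sum>i\<in>{1..m}. Li i) / real m)) ^ (i - 1)"
  assumes m_pos: "m \<ge> 1"
    and grad: "\<And>i y. i \<in> {1..m} \<Longrightarrow> (fi i has_derivative (\<lambda>h. gfi i y \<bullet> h)) (at y)"
    and grad_cont: "\<And>i. i \<in> {1..m} \<Longrightarrow> continuous_on UNIV (gfi i)"
    and Li_nonneg: "\<And>i. i \<in> {1..m} \<Longrightarrow> Li i \<ge> 0"
    and lip: "\<And>i y z. i \<in> {1..m} \<Longrightarrow> norm (gfi i y - gfi i z) \<le> Li i * norm (y - z)"
    and mu_pos: "\<mu> > 0"
    and strong: "convex_on UNIV (\<lambda>y. f y - \<mu> / 2 * norm y ^ 2)"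
    and r_pcc: "proper_closed_convex r"
    and xstar_min: "\<And>y. F xstar \<le> F y"
    and tau: "\<And>i j. i \<in> {1..m} \<Longrightarrow> j - K \<le> \<tau> i j \<and> \<tau> i j \<le> j"
    and iter: "\<And>j. is_prox r \<eta> (x j - \<eta> *\<^sub>R ((\<Sum>i\<in>{1..m}. gfi i (x (\<tau> i j))) /\<^sub>R real m)) (x (Suc j))"
    and eta_pos: "\<eta> > 0"
    and eta_le: "\<eta> \<le> 1 / (L * (real K + 1))"
    and a_ge: "a \<ge> 2"
    and k_ge: "k \<ge> a * K + 1"
  shows "(1 + \<eta> * \<mu> / 8) * real_of_ereal (F (x (Suc k)) - F xstar)
    \<le> (1 - (\<Sum>i\<in>{1..a-1}. \<epsilon> i)) * real_of_ereal (F (x k) - F xstar) + (\<Sum>i\<in>{1..a-1}. \<epsilon> i * real_of_ereal (F (x (k - i * K)) - F xstar))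
      + 4 * real K * Q * \<epsilon> (a - 1) * (\<Sum>j\<in>{k - a * K..k}. real_of_ereal (F (x j) - F xstar))"
proof -
  define G where "G = (\<lambda>y. (\<Sum>i\<in>{1..m}. gfi i y) /\<^sub>R real m)"
  define g where "g = (\<lambda>j. (\<Sum>i\<in>{1..m}. gfi i (x (\<tau> i j))) /\<^sub>R real m)"
  define rr where "rr = (\<lambda>z. real_of_ereal (r z))"
  define Fs where "Fs = f xstar + rr xstar"
  define Fr where "Fr = (\<lambda>j. f (x j) + rr (x j) - Fs)"
  define e where "e = (\<lambda>j. x (Suc j) - x j)"
  define E where "E = (\<lambda>j. norm (e j) ^ 2)"
  define A where "A = (\<lambda>j. \<Sum>l\<in>{j-K..<j}. norm (e l))"
  define B where "B = (\<lambda>j. \<Sum>l\<in>{j-K..<j}. E l)"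
  have mpos: "real m > 0" using m_pos by simp
  have Fdef: "\<And>y. F y = ereal (f y) + r y" by (simp add: F_def f_def)
  have L0: "L \<ge> 0" unfolding L_def using Li_nonneg by (intro divide_nonneg_nonneg sum_nonneg) auto
  have hLK: "\<eta> * L * (real K + 1) \<le> 1"
  proof (cases "L * (real K + 1) = 0")
    case True thus ?thesis using eta_le eta_pos by simp
  next
    case False
    hence "L * (real K + 1) > 0" using L0 by (simp add: less_le)
    thus ?thesis using eta_le eta_pos by (simp add: field_simps)
  qed
  have Lpos: "L > 0"
  proof (rule ccontr)
    assume "\<not> L > 0" hence "L = 0" using L0 by simp
    thus False using eta_le eta_pos by simp
  qed
  have hsplit: "\<eta> * L * (real K + 1) = \<eta> * L * real K + \<eta> * L" by (simp add: distrib_left)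
  have "\<eta> * L * real K \<ge> 0" "\<eta> * L \<ge> 0" using eta_pos L0 by auto
  hence etaL1: "\<eta> * L \<le> 1" and etaLK: "\<eta> * L * real K \<le> 1" using hLK hsplit by linarith+
  have der: "\<And>y. (f has_derivative (\<lambda>h. G y \<bullet> h)) (at y)"
  proof -
    fix y
    have "((\<lambda>y. \<Sum>i\<in>{1..m}. fi i y) has_derivative (\<lambda>h. \<Sum>i\<in>{1..m}. gfi i y \<bullet> h)) (at y)"
      by (rule has_derivative_sum) (use grad in auto)
    hence "((\<lambda>y. inverse (real m) * (\<Sum>i\<in>{1..m}. fi i y)) has_derivative (\<lambda>h. inverse (real m) * (\<Sum>i\<in>{1..m}. gfi i y \<bullet> h))) (at y)"
      by (rule has_derivative_mult_right)
    moreover have "(\<lambda>y. inverse (real m) * (\<Sum>i\<in>{1..m}. fi i y)) = f"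
      by (auto simp: f_def fun_eq_iff field_simps)
    moreover have "(\<lambda>h. inverse (real m) * (\<Sum>i\<in>{1..m}. gfi i y \<bullet> h)) = (\<lambda>h. G y \<bullet> h)"
      by (auto simp: G_def fun_eq_iff inner_sum_left)
    ultimately show "(f has_derivative (\<lambda>h. G y \<bullet> h)) (at y)" by simp
  qed
  have gdiff: "norm (g j - G u) \<le> L * D" if hD: "\<And>i. i \<in> {1..m} \<Longrightarrow> norm (x (\<tau> i j) - u) \<le> D" for j u D
  proof -
    have "g j - G u = (\<Sum>i\<in>{1..m}. gfi i (x (\<tau> i j)) - gfi i u) /\<^sub>R real m"
      by (simp add: g_def G_def sum_subtractf scaleR_diff_right)
    hence "norm (g j - G u) = norm (\<Sum>i\<in>{1..m}. gfi i (x (\<tau> i j)) - gfi i u) / real m"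
      using mpos by (simp add: field_simps)
    also have "\<dots> \<le> (\<Sum>i\<in>{1..m}. Li i * D) / real m"
    proof (intro divide_right_mono order.trans[OF norm_sum] sum_mono)
      fix i assume i: "i \<in> {1..m}"
      have "norm (gfi i (x (\<tau> i j)) - gfi i u) \<le> Li i * norm (x (\<tau> i j) - u)" by (rule lip[OF i])
      also have "\<dots> \<le> Li i * D" by (intro mult_left_mono hD i Li_nonneg)
      finally show "norm (gfi i (x (\<tau> i j)) - gfi i u) \<le> Li i * D" .
    qed simp
    also have "\<dots> = L * D" by (simp add: L_def sum_distrib_right)
    finally show ?thesis .
  qed
  have lipG: "norm (G y - G z) \<le> L * norm (y - z)" for y z
  proof -
    have "G y - G z = (\<Sum>i\<in>{1..m}. gfi i y - gfi i z) /\<^sub>R real m"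
      by (simp add: G_def sum_subtractf scaleR_diff_right)
    hence "norm (G y - G z) = norm (\<Sum>i\<in>{1..m}. gfi i y - gfi i z) / real m"
      using mpos by (simp add: field_simps)
    also have "\<dots> \<le> (\<Sum>i\<in>{1..m}. Li i * norm (y - z)) / real m"
      by (intro divide_right_mono order.trans[OF norm_sum] sum_mono lip) auto
    also have "\<dots> = L * norm (y - z)" by (simp add: L_def sum_distrib_right)
    finally show ?thesis .
  qed
  note qb = quad_bounds[of f G, OF der lipG]
  have rfin: "\<And>j. r (x (Suc j)) = ereal (rr (x (Suc j)))"
    unfolding rr_def using prox_finite[OF r_pcc eta_pos iter] by blast
  have rninf: "\<And>z. r z \<noteq> -\<infinity>" using r_pcc by (auto simp: proper_closed_convex_def)
  have rstar: "r xstar = ereal (rr xstar)"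
  proof -
    have "ereal (f xstar) + r xstar \<le> ereal (f (x 1)) + ereal (rr (x 1))"
      using xstar_min[of "x 1"] rfin[of 0] by (simp add: Fdef)
    hence "r xstar \<noteq> \<infinity>" by auto
    thus ?thesis unfolding rr_def using rninf[of xstar] by (cases "r xstar") auto
  qed
  have Fr_eq: "real_of_ereal (F (x j) - F xstar) = Fr j" if j1: "j \<ge> 1" for j
  proof -
    obtain j' where j': "j = Suc j'" using j1 by (cases j) auto
    show ?thesis unfolding j' Fdef rfin rstar by (simp add: Fr_def Fs_def)
  qed
  have Fr_nn: "Fr j \<ge> 0" if j1: "j \<ge> 1" for j
  proof -
    obtain j' where j': "j = Suc j'" using j1 by (cases j) auto
    have "ereal (f xstar) + ereal (rr xstar) \<le> ereal (f (x j)) + ereal (rr (x j))"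
      using xstar_min[of "x j"] unfolding Fdef j' rfin rstar .
    thus ?thesis by (simp add: Fr_def Fs_def j')
  qed
  have Enn: "\<And>j. E j \<ge> 0" by (simp add: E_def)
  have Bnn: "\<And>j. B j \<ge> 0" unfolding B_def using Enn by (simp add: sum_nonneg)
  have Ann: "\<And>j. A j \<ge> 0" unfolding A_def by (simp add: sum_nonneg)
  have delay: "norm (x j - x (\<tau> i j)) \<le> A j" if i: "i \<in> {1..m}" for i j
  proof -
    have t: "j - K \<le> \<tau> i j" "\<tau> i j \<le> j" using tau[OF i] by auto
    have "x j - x (\<tau> i j) = (\<Sum>l = \<tau> i j..<j. e l)"
      unfolding e_def by (rule sum_Suc_diff'[symmetric]) (use t in auto)
    hence "norm (x j - x (\<tau> i j)) \<le> (\<Sum>l = \<tau> i j..<j. norm (e l))"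
      by (simp add: norm_sum)
    also have "\<dots> \<le> A j" unfolding A_def by (rule sum_mono2) (use t in auto)
    finally show ?thesis .
  qed
  have cs: "A j ^ 2 \<le> real K * B j" for j
  proof -
    have "A j ^ 2 \<le> (\<Sum>l\<in>{j-K..<j}. norm (e l) ^ 2) * real (card {j-K..<j})"
      unfolding A_def by (rule sum_squared_le_sum_of_squares)
    also have "\<dots> \<le> B j * real K"
      unfolding B_def E_def by (intro mult_left_mono) (auto simp: sum_nonneg)
    finally show ?thesis by (simp add: mult.commute)
  qed
  have amgm: "A j * norm (e j) \<le> real K / 2 * E j + B j / 2" for j
  proof (cases "K = 0")
    case True thus ?thesis by (simp add: A_def B_def E_def)
  next
    case False
    have "0 \<le> (real K * norm (e j) - A j)^2" by simp
    hence "2 * real K * (A j * norm (e j)) \<le> real K ^ 2 * norm (e j) ^ 2 + A j ^ 2"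
      by (simp add: power2_eq_square algebra_simps)
    also have "\<dots> \<le> real K ^ 2 * norm (e j) ^ 2 + real K * B j" using cs[of j] by simp
    finally have "real K * (2 * (A j * norm (e j))) \<le> real K * (real K * E j + B j)"
      by (simp add: E_def power2_eq_square algebra_simps)
    hence "2 * (A j * norm (e j)) \<le> real K * E j + B j" using False by simp
    thus ?thesis by simp
  qed
  have opt: "Fr j \<ge> \<mu> / 2 * norm (x j - xstar) ^ 2" if j1: "j \<ge> 1" for j
  proof -
    obtain j' where j': "j = Suc j'" using j1 by (cases j) auto
    define y where "y = x j"
    have ry: "r y = ereal (rr y)" unfolding y_def j' by (rule rfin)
    define N where "N = norm (xstar - y) ^ 2"
    have "\<mu> / 2 * N - (f y + rr y - Fs) \<le> 0"
    proof (rule lim0)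
      fix t :: real assume t: "0 < t" "t < 1"
      define z where "z = (1-t) *\<^sub>R xstar + t *\<^sub>R y"
      have fz: "f z \<le> (1-t) * f xstar + t * f y - \<mu>/2 * (t * (1-t) * N)"
        unfolding z_def N_def by (rule chord_sc[OF strong]) (use t in auto)
      have rz: "r z \<le> ereal ((1-t) * rr xstar + t * rr y)"
        unfolding z_def rr_def by (rule r_chord[OF r_pcc]) (use t rstar ry in auto)
      have "ereal (f xstar) + ereal (rr xstar) \<le> ereal (f z) + r z"
        using xstar_min[of z] unfolding Fdef rstar .
      also have "\<dots> \<le> ereal (f z) + ereal ((1-t) * rr xstar + t * rr y)"
        using rz by (rule add_left_mono)
      finally have "f xstar + rr xstar \<le> f z + ((1-t) * rr xstar + t * rr y)" by simp
      with fz have "t * (\<mu> / 2 * N - (f y + rr y - Fs)) \<le> t * (t * (\<mu> / 2 * N))"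
        unfolding Fs_def by (simp add: algebra_simps)
      thus "\<mu> / 2 * N - (f y + rr y - Fs) \<le> t * (\<mu> / 2 * N)" using t by simp
    qed
    thus ?thesis by (simp add: Fr_def y_def N_def norm_minus_commute)
  qed
  have scg: "f w \<ge> f z + G z \<bullet> (w - z) + \<mu> / 2 * norm (w - z) ^ 2" for w z
  proof -
    define N where "N = norm (z - w) ^ 2"
    have "f z + G z \<bullet> (w - z) + \<mu> / 2 * N - f w \<le> 0"
    proof (rule lim0)
      fix t :: real assume t: "0 < t" "t < 1"
      define q where "q = (1-t) *\<^sub>R z + t *\<^sub>R w"
      have fq: "f q \<le> (1-t) * f z + t * f w - \<mu>/2 * (t * (1-t) * N)"
        unfolding q_def N_def by (rule chord_sc[OF strong]) (use t in auto)
      have qz: "q - z = t *\<^sub>R (w - z)" by (simp add: q_def algebra_simps)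
      have "f q \<ge> f z + G z \<bullet> (q - z) - L / 2 * norm (q - z) ^ 2" by (rule qb(2))
      also have "G z \<bullet> (q - z) = t * (G z \<bullet> (w - z))" by (simp add: qz)
      also have "norm (q - z) ^ 2 = t^2 * N" by (simp add: qz N_def power_mult_distrib norm_minus_commute)
      finally have "f z + t * (G z \<bullet> (w - z)) - L / 2 * (t^2 * N) \<le> f q" .
      with fq have "t * (f z + G z \<bullet> (w - z) + \<mu> / 2 * N - f w) \<le> t * (t * ((L + \<mu>) / 2 * N))"
        by (simp add: algebra_simps power2_eq_square)
      thus "f z + G z \<bullet> (w - z) + \<mu> / 2 * N - f w \<le> t * ((L + \<mu>) / 2 * N)" using t by simp
    qed
    thus ?thesis by (simp add: N_def norm_minus_commute)
  qed
  have sq2: "\<And>a b::real. (a + b)^2 \<le> 2 * a^2 + 2 * b^2"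
  proof -
    fix a b :: real
    have "0 \<le> (a - b)^2" by simp
    thus "(a + b)^2 \<le> 2 * a^2 + 2 * b^2" by (simp add: power2_eq_square algebra_simps)
  qed
  have D2: "Fr j - Fr (Suc j) \<ge> E j / (2*\<eta>) - L/2 * B j" if j1: "j \<ge> 1" for j
  proof -
    obtain j' where j': "j = Suc j'" using j1 by (cases j) auto
    define p where "p = x (Suc j)"
    define v where "v = x j - \<eta> *\<^sub>R g j"
    have px: "is_prox r \<eta> v p" using iter[of j] by (simp add: p_def v_def g_def)
    have rxj: "r (x j) \<noteq> \<infinity>" using rfin[of j'] j' by simp
    have vi: "\<eta> * (rr p - rr (x j)) \<le> (p - v) \<bullet> (x j - p)"
      unfolding rr_def by (rule prox_vi[OF r_pcc eta_pos px rxj])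
    have pv: "p - v = e j + \<eta> *\<^sub>R g j" by (simp add: p_def v_def e_def)
    have xp: "x j - p = - e j" by (simp add: p_def e_def)
    have "\<eta> * (rr p - rr (x j) + g j \<bullet> e j) \<le> - E j"
      using vi unfolding pv xp by (simp add: E_def power2_norm_eq_inner inner_add_left algebra_simps inner_commute)
    hence "rr p - rr (x j) + g j \<bullet> e j \<le> (- E j) / \<eta>"
      by (subst pos_le_divide_eq[OF eta_pos]) (simp add: mult.commute)
    hence vi3: "rr p - rr (x j) + g j \<bullet> e j \<le> - (E j / \<eta>)" by simp
    have qu: "f p \<le> f (x j) + G (x j) \<bullet> e j + L/2 * E j"
      using qb(1)[of p "x j"] by (simp add: p_def e_def E_def)
    have gd: "norm (g j - G (x j)) \<le> L * A j"
      by (rule gdiff) (use delay in \<open>auto simp: norm_minus_commute\<close>)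
    have "(G (x j) - g j) \<bullet> e j \<le> norm (G (x j) - g j) * norm (e j)" by (rule norm_cauchy_schwarz)
    also have "\<dots> \<le> L * A j * norm (e j)"
      using gd by (intro mult_right_mono) (auto simp: norm_minus_commute)
    also have "\<dots> = L * (A j * norm (e j))" by simp
    also have "\<dots> \<le> L * (real K / 2 * E j + B j / 2)" using amgm[of j] L0 by (intro mult_left_mono) auto
    finally have cross: "G (x j) \<bullet> e j - g j \<bullet> e j \<le> L * real K / 2 * E j + L/2 * B j"
      by (simp add: inner_diff_left algebra_simps)
    have "E j * (\<eta> * L * (real K + 1)) \<le> E j * 1" using hLK Enn[of j] by (intro mult_left_mono) auto
    hence "L * (real K + 1) / 2 * E j \<le> E j / (2 * \<eta>)"
      using eta_pos by (simp add: field_simps)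
    hence lk: "L/2 * E j + L * real K / 2 * E j \<le> E j / \<eta> - E j / (2 * \<eta>)"
      using eta_pos by (simp add: field_simps)
    have "Fr (Suc j) = f p + rr p - Fs" by (simp add: Fr_def p_def)
    thus ?thesis using vi3 qu cross lk unfolding Fr_def by linarith
  qed
  have D1: "(1 + \<eta> * \<mu> / 8) * Fr (Suc j) \<le> Fr j + L * B j" if j1: "j \<ge> 1" for j
  proof -
    define p where "p = x (Suc j)"
    define v where "v = x j - \<eta> *\<^sub>R g j"
    define w where "w = xstar - p"
    define s where "s = (1/\<eta>) *\<^sub>R (p - v) - G p"
    have px: "is_prox r \<eta> v p" using iter[of j] by (simp add: p_def v_def g_def)
    have rxs: "r xstar \<noteq> \<infinity>" using rstar by simp
    have vi: "\<eta> * (rr p - rr xstar) \<le> (p - v) \<bullet> w"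
      unfolding rr_def w_def by (rule prox_vi[OF r_pcc eta_pos px rxs])
    hence vi2: "rr p - rr xstar \<le> (1/\<eta>) * ((p - v) \<bullet> w)"
      using eta_pos by (simp add: field_simps)
    have sc: "f xstar \<ge> f p + G p \<bullet> w + \<mu> / 2 * norm w ^ 2"
      using scg[where w=xstar and z=p] by (simp add: w_def)
    have sw: "s \<bullet> w = (1/\<eta>) * ((p - v) \<bullet> w) - G p \<bullet> w"
      by (simp add: s_def inner_diff_left)
    have F1: "Fr (Suc j) \<le> s \<bullet> w - \<mu> / 2 * norm w ^ 2"
      using vi2 sc sw unfolding Fr_def Fs_def p_def by linarith
    have "s \<bullet> w \<le> norm s * norm w" by (rule norm_cauchy_schwarz)
    moreover have "2 * \<mu> * (norm s * norm w - \<mu> / 2 * norm w ^ 2) \<le> norm s ^ 2"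
    proof -
      have "0 \<le> (norm s - \<mu> * norm w)^2" by simp
      thus ?thesis by (simp add: power2_eq_square algebra_simps)
    qed
    hence "norm s * norm w - \<mu> / 2 * norm w ^ 2 \<le> norm s ^ 2 / (2 * \<mu>)"
      using mu_pos by (simp add: pos_le_divide_eq mult.commute)
    ultimately have F2: "Fr (Suc j) \<le> norm s ^ 2 / (2 * \<mu>)" using F1 by linarith
    have seq: "s = (1/\<eta>) *\<^sub>R e j + (g j - G p)"
      using eta_pos by (simp add: s_def p_def v_def e_def scaleR_diff_right algebra_simps)
    have gd: "norm (g j - G p) \<le> L * (A j + norm (e j))"
    proof (rule gdiff)
      fix i assume i: "i \<in> {1..m}"
      have "norm (x (\<tau> i j) - p) \<le> norm (x (\<tau> i j) - x j) + norm (x j - p)"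
        by (rule norm_diff_triangle_le[of _ "x j"]) auto
      also have "\<dots> \<le> A j + norm (e j)"
        using delay[OF i, of j] by (simp add: norm_minus_commute p_def e_def)
      finally show "norm (x (\<tau> i j) - p) \<le> A j + norm (e j)" .
    qed
    have ns: "norm s \<le> (1/\<eta> + L) * norm (e j) + L * A j"
    proof -
      have "norm s \<le> norm ((1/\<eta>) *\<^sub>R e j) + norm (g j - G p)" unfolding seq by (rule norm_triangle_ineq)
      also have "norm ((1/\<eta>) *\<^sub>R e j) = (1/\<eta>) * norm (e j)" using eta_pos by simp
      finally show ?thesis using gd by (simp add: algebra_simps)
    qed
    have Lle: "L \<le> 1/\<eta>" using etaL1 eta_pos by (simp add: field_simps)
    have X: "(1/\<eta> + L) * norm (e j) \<le> (2/\<eta>) * norm (e j)"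
      using Lle by (intro mult_right_mono) auto
    have ns2: "norm s \<le> (2/\<eta>) * norm (e j) + L * A j" using ns X by linarith
    have "norm s ^ 2 \<le> ((2/\<eta>) * norm (e j) + L * A j) ^ 2"
      using ns2 by (intro power_mono) auto
    also have "\<dots> \<le> 2 * ((2/\<eta>) * norm (e j))^2 + 2 * (L * A j)^2"
      by (rule sq2)
    also have "\<dots> = 8 / \<eta>^2 * E j + 2 * L^2 * A j ^ 2"
      by (simp add: E_def power_mult_distrib power_divide)
    also have "\<dots> \<le> 8 / \<eta>^2 * E j + 2 * L^2 * (real K * B j)"
      using cs[of j] by (intro add_left_mono mult_left_mono) auto
    finally have ns3: "norm s ^ 2 \<le> 8 / \<eta>^2 * E j + 2 * L^2 * (real K * B j)" .
    have "\<eta> * \<mu> / 8 * Fr (Suc j) \<le> \<eta> * \<mu> / 8 * (norm s ^ 2 / (2 * \<mu>))"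
      using F2 eta_pos mu_pos by (intro mult_left_mono) auto
    also have "\<dots> = \<eta> / 16 * norm s ^ 2" using mu_pos by (simp add: field_simps)
    also have "\<dots> \<le> \<eta> / 16 * (8 / \<eta>^2 * E j + 2 * L^2 * (real K * B j))"
      using ns3 eta_pos by (intro mult_left_mono) auto
    also have "\<dots> = E j / (2 * \<eta>) + (\<eta> * L * real K) * (L * B j) / 8"
      using eta_pos by (simp add: field_simps power2_eq_square)
    also have "\<dots> \<le> E j / (2 * \<eta>) + 1 * (L * B j) / 8"
      using etaLK L0 Bnn[of j] by (intro add_left_mono divide_right_mono mult_right_mono) auto
    finally have H: "\<eta> * \<mu> / 8 * Fr (Suc j) \<le> E j / (2 * \<eta>) + 1 * (L * B j) / 8" .
    have LB: "L * B j \<ge> 0" using L0 Bnn[of j] by simp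
    have eq: "(1 + \<eta> * \<mu> / 8) * Fr (Suc j) = Fr (Suc j) + \<eta> * \<mu> / 8 * Fr (Suc j)"
      by (simp add: distrib_right)
    show ?thesis unfolding eq using D2[OF j1] H LB by linarith
  qed
  have D3: "E l \<le> 4 / \<mu> * (Fr l + Fr (Suc l))" if l1: "l \<ge> 1" for l
  proof -
    define a1 where "a1 = norm (x (Suc l) - xstar)"
    define b1 where "b1 = norm (x l - xstar)"
    have "norm (e l) \<le> a1 + b1" unfolding e_def a1_def b1_def
      by (rule norm_diff_triangle_le[of _ xstar]) (auto simp add: norm_minus_commute)
    hence "E l \<le> (a1 + b1)^2" unfolding E_def by (intro power_mono) auto
    also have "\<dots> \<le> 2 * a1^2 + 2 * b1^2" by (rule sq2)
    finally have "\<mu> * E l \<le> \<mu> * (2 * a1^2 + 2 * b1^2)" using mu_pos by simp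
    also have "\<dots> = 4 * (\<mu>/2 * a1^2) + 4 * (\<mu>/2 * b1^2)" by (simp add: algebra_simps)
    also have "\<dots> \<le> 4 * (Fr l + Fr (Suc l))"
      using opt[of "Suc l"] opt[OF l1] unfolding a1_def b1_def by simp
    finally show ?thesis using mu_pos by (simp add: field_simps)
  qed
  define \<rho> where "\<rho> = \<eta> * real K * L"
  have eps_eq: "\<And>i. \<epsilon> i = 2 * \<eta> * L * \<rho> ^ (i - 1)" by (simp add: \<epsilon>_def L_def \<rho>_def)
  have Q_eq: "Q = L / \<mu>" by (simp add: Q_def L_def)
  have rho0: "\<rho> \<ge> 0" using eta_pos L0 by (simp add: \<rho>_def)
  have enn: "\<And>i. \<epsilon> i \<ge> 0" unfolding eps_eq using eta_pos L0 rho0 by simp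
  have aK: "(a - 1) * K + K = a * K" using a_ge by (cases a) (auto simp: algebra_simps)
  have k1: "k \<ge> 1" using k_ge by simp
  have kaK: "k - a * K \<ge> 1" using k_ge by simp
  define W where "W = (\<lambda>i. \<Sum>l\<in>{k - i*K..<k}. E l)"
  have Ci: "Fr (k - i*K) - Fr k \<ge> W i / (2*\<eta>) - L * real K / 2 * W (Suc i)" if i: "1 \<le> i" "i \<le> a - 1" for i
  proof -
    have iK: "i * K \<le> (a - 1) * K" using i by (intro mult_le_mono1) auto
    have low: "K + 1 \<le> k - i * K" using k_ge iK aK by arith
    have s1: "(\<Sum>j = k - i*K..<k. Fr (Suc j) - Fr j) = Fr k - Fr (k - i*K)"
      by (rule sum_Suc_diff') simp
    have "Fr (k - i*K) - Fr k = (\<Sum>j = k - i*K..<k. Fr j) - (\<Sum>j = k - i*K..<k. Fr (Suc j))"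
      using s1 by (simp add: sum_subtractf)
    also have "\<dots> = (\<Sum>j = k - i*K..<k. Fr j - Fr (Suc j))" by (simp add: sum_subtractf)
    also have "\<dots> \<ge> (\<Sum>j = k - i*K..<k. E j / (2*\<eta>) - L/2 * B j)"
      by (rule sum_mono, rule D2) (use low in auto)
    finally have "Fr (k - i*K) - Fr k \<ge> W i / (2*\<eta>) - L/2 * (\<Sum>j = k - i*K..<k. B j)"
      by (simp add: W_def sum_subtractf sum_divide_distrib sum_distrib_left)
    moreover have "(\<Sum>j = k - i*K..<k. B j) \<le> real K * W (Suc i)"
    proof -
      have "(\<Sum>j = k - i*K..<k. B j) \<le> real K * (\<Sum>l\<in>{k - i*K - K..<k}. E l)"
        unfolding B_def by (rule count_lemma[OF Enn])
      moreover have "k - i*K - K = k - Suc i * K" by (simp add: algebra_simps)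
      ultimately show ?thesis by (simp add: W_def)
    qed
    hence "L/2 * (\<Sum>j = k - i*K..<k. B j) \<le> L/2 * (real K * W (Suc i))"
      using L0 by (intro mult_left_mono) auto
    ultimately show ?thesis by (simp add: algebra_simps)
  qed
  define u where "u = (\<lambda>i. \<epsilon> i * W i / (2*\<eta>))"
  have rel: "\<epsilon> i * (L * real K / 2) = \<epsilon> (Suc i) / (2*\<eta>)" if i1: "i \<ge> 1" for i
  proof -
    obtain i' where i': "i = Suc i'" using i1 by (cases i) auto
    show ?thesis unfolding eps_eq i' using eta_pos by (simp add: \<rho>_def field_simps)
  qed
  have sumC: "(\<Sum>i\<in>{1..a-1}. \<epsilon> i * (Fr (k - i*K) - Fr k)) \<ge> (\<Sum>i\<in>{1..a-1}. u i - u (Suc i))"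
  proof (rule sum_mono)
    fix i assume i: "i \<in> {1..a-1}"
    have "\<epsilon> i * (Fr (k - i*K) - Fr k) \<ge> \<epsilon> i * (W i / (2*\<eta>) - L * real K / 2 * W (Suc i))"
      using Ci[of i] i enn[of i] by (intro mult_left_mono) auto
    also have "\<epsilon> i * (W i / (2*\<eta>) - L * real K / 2 * W (Suc i)) = u i - (\<epsilon> i * (L * real K / 2)) * W (Suc i)"
      by (simp add: u_def algebra_simps)
    also have "\<dots> = u i - u (Suc i)" using rel[of i] i by (simp add: u_def)
    finally show "u i - u (Suc i) \<le> \<epsilon> i * (Fr (k - i*K) - Fr k)" .
  qed
  have tel: "(\<Sum>i\<in>{1..a-1}. u i - u (Suc i)) = u 1 - u a"
  proof -
    have "{1..a-1} = {1..<a}" using a_ge by auto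
    moreover have "(\<Sum>i = 1..<a. u (Suc i) - u i) = u a - u 1" by (rule sum_Suc_diff') (use a_ge in auto)
    ultimately show ?thesis by (simp add: sum_subtractf)
  qed
  have u1: "u 1 = L * B k" using eta_pos by (simp add: u_def eps_eq W_def B_def)
  have Wa: "W a \<le> 8 / \<mu> * (\<Sum>j\<in>{k - a*K..k}. Fr j)"
  proof -
    have "W a \<le> (\<Sum>l\<in>{k - a*K..<k}. 4 / \<mu> * (Fr l + Fr (Suc l)))"
      unfolding W_def by (rule sum_mono, rule D3) (use kaK in auto)
    also have "\<dots> = 4 / \<mu> * ((\<Sum>l\<in>{k - a*K..<k}. Fr l) + (\<Sum>l\<in>{k - a*K..<k}. Fr (Suc l)))"
      by (simp only: sum.distrib[symmetric] sum_distrib_left)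
    also have "\<dots> \<le> 4 / \<mu> * ((\<Sum>j\<in>{k - a*K..k}. Fr j) + (\<Sum>j\<in>{k - a*K..k}. Fr j))"
    proof -
      have "(\<Sum>l\<in>{k - a*K..<k}. Fr l) \<le> (\<Sum>j\<in>{k - a*K..k}. Fr j)"
        by (rule sum_mono2) (use Fr_nn kaK in auto)
      moreover have "(\<Sum>l\<in>{k - a*K..<k}. Fr (Suc l)) = (\<Sum>l\<in>{Suc (k - a*K)..<Suc k}. Fr l)"
        by (rule sum.shift_bounds_Suc_ivl[symmetric])
      moreover have "(\<Sum>l\<in>{Suc (k - a*K)..<Suc k}. Fr l) \<le> (\<Sum>j\<in>{k - a*K..k}. Fr j)"
        by (rule sum_mono2) (use Fr_nn kaK in auto)
      ultimately show ?thesis using mu_pos by (intro mult_left_mono) auto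
    qed
    finally show ?thesis by simp
  qed
  have ua: "u a \<le> 4 * real K * Q * \<epsilon> (a - 1) * (\<Sum>j\<in>{k - a*K..k}. Fr j)"
  proof -
    obtain a' where a': "a = Suc (Suc a')" using a_ge by (metis add_2_eq_Suc le_Suc_ex)
    have "u a = \<epsilon> a / (2*\<eta>) * W a" by (simp add: u_def)
    also have "\<dots> \<le> \<epsilon> a / (2*\<eta>) * (8 / \<mu> * (\<Sum>j\<in>{k - a*K..k}. Fr j))"
      using Wa enn[of a] eta_pos by (intro mult_left_mono) auto
    also have "\<epsilon> a / (2*\<eta>) * (8 / \<mu> * (\<Sum>j\<in>{k - a*K..k}. Fr j)) = 4 * real K * Q * \<epsilon> (a - 1) * (\<Sum>j\<in>{k - a*K..k}. Fr j)"
      unfolding eps_eq Q_eq a' using eta_pos mu_pos by (simp add: \<rho>_def field_simps)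
    finally show ?thesis .
  qed
  have g1: "real_of_ereal (F (x (Suc k)) - F xstar) = Fr (Suc k)" by (rule Fr_eq) simp
  have g2: "real_of_ereal (F (x k) - F xstar) = Fr k" by (rule Fr_eq[OF k1])
  have g3: "(\<Sum>i\<in>{1..a-1}. \<epsilon> i * real_of_ereal (F (x (k - i * K)) - F xstar)) = (\<Sum>i\<in>{1..a-1}. \<epsilon> i * Fr (k - i * K))"
  proof (rule sum.cong[OF refl])
    fix i assume i: "i \<in> {1..a-1}"
    have iK: "i * K \<le> (a - 1) * K" using i by (intro mult_le_mono1) auto
    have "1 \<le> k - i * K" using k_ge iK aK by arith
    thus "\<epsilon> i * real_of_ereal (F (x (k - i * K)) - F xstar) = \<epsilon> i * Fr (k - i * K)" by (simp add: Fr_eq)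
  qed
  have g4: "(\<Sum>j\<in>{k - a * K..k}. real_of_ereal (F (x j) - F xstar)) = (\<Sum>j\<in>{k - a * K..k}. Fr j)"
    by (rule sum.cong[OF refl]) (use kaK Fr_eq in auto)
  have split: "(1 - (\<Sum>i\<in>{1..a-1}. \<epsilon> i)) * Fr k + (\<Sum>i\<in>{1..a-1}. \<epsilon> i * Fr (k - i * K))
      = Fr k + (\<Sum>i\<in>{1..a-1}. \<epsilon> i * (Fr (k - i*K) - Fr k))"
    by (simp add: algebra_simps sum_subtractf sum_distrib_right sum_distrib_left)
  show ?thesis
    unfolding g1 g2 g3 g4 using D1[OF k1] split sumC tel u1 ua by linarith
qed

end
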